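(* For any admissible pair $(r,a)$ and every $i=0,\dots,r-1$, the divisor $X_i-E_1$ on the Danilov resolution of $\frac1r(1,a,r-a)$ is effective.
   Context: Notation: for integers $s$ and $t>0$, $\langle s\rangle_t$ is the least non-negative integer congruent to $s$ modulo $t$. A pair of integers $(r,a)$ is admissible if $r\ge1$, $0\le a<r$, $\gcd(r,a)=1$ (so $a=0$ only for $r=1$). For admissible $(r,a)$ put $N(r,a)=\mathbb Z^3+\mathbb Z\cdot\frac1r(1,a,r-a)\subset\mathbb Q^3$; $e_1,e_2,e_3$ is the standard basis and $\Delta(r,a)$ the cone spanned by $e_1,e_2,e_3$. Let $b$ be an inverse of $a$ modulo $r$ and $p_i=\frac1r(\langle -ib\rangle_r,r-i,i)$, $i=0,\dots,r$ (so $p_0=e_2$, $p_r=e_3$, $p_{r-a}=\frac1r(1,a,r-a)$). For $r>1$ let $(r_L,a_L)=(r-a,\langle r\rangle_{r-a})$, $(r_R,a_R)=(a,\langle -r\rangle_a)$; there are lattice isomorphisms $L:N(r_L,a_L)\to N(r,a)$, $R:N(r_R,a_R)\to N(r,a)$ with $L(e_1)=e_1$, $L(e_2)=e_2$, $L(e_3)=p_{r-a}$, $R(e_1)=e_1$, $R(e_2)=p_{r-a}$, $R(e_3)=e_3$. The Danilov fan $\Sigma(r,a)$ is defined recursively: $\Sigma(1,0)$ is $\Delta(1,0)$ with its faces; for $r>1$, $\Sigma(r,a)$ consists of the cone spanned by $e_2,e_3,p_{r-a}$ with its faces, together with $L(\Sigma(r_L,a_L))$ and $R(\Sigma(r_R,a_R))$.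 The Danilov resolution $Y$ of $\frac1r(1,a,r-a)$ is the smooth toric variety of $\Sigma(r,a)$, with torus $T$; its rays are spanned by $e_1,p_0,\dots,p_r$; $D_i$ is the $T$-invariant prime divisor of the ray through $p_i$ and $E_j$ that of $e_j$. The permutation $\tau(r,a,\cdot)$ of $\{0,\dots,r-1\}$: if $a\in\{1,r-1\}$, $\tau(r,a,i)=\langle ai-1\rangle_r$; otherwise $\tau(r,a,i)=\tau(r-a,\langle r\rangle_{r-a},\langle i\rangle_{r-a})$ for $i\ge a$ and $\tau(r,a,i)=(r-a)+\tau(a,\langle -r\rangle_a,i)$ for $i<a$. With indices mod $r$, on $Y$ define $Y_{i-a}=\sum_{k=0}^{\tau(r,a,i)}D_k$, $Z_i=\sum_{k=\tau(r,a,i)+1}^{r}D_k$ ($i=0,\dots,r-1$), and $X_0,\dots,X_{r-1}$ the unique divisors with $X_0=E_1$ and $X_i+Z_{i+1}=Z_i+X_{i-a}$ for all $i$. *)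

theory Defs
  imports Main
begin

definition admissible :: "nat \<Rightarrow> nat \<Rightarrow> bool" where
  "admissible r a \<longleftrightarrow> 1 \<le> r \<and> a < r \<and> gcd r a = 1"

text \<open>For admissible (r,a) the first branch is exactly the case a in {1, r-1}
  (for r = 1 the only admissible a is 0 = r-1); the extra guards only make the
  function total on non-admissible arguments.\<close>
function tau :: "nat \<Rightarrow> nat \<Rightarrow> nat \<Rightarrow> nat" where
  "tau r a i =
     (if a = 1 \<or> a + 1 = r \<or> a = 0 \<or> r \<le> a
      then nat ((int a * int i - 1) mod int r)
      else if a \<le> i then tau (r - a) (r mod (r - a)) (i mod (r - a))
      else (r - a) + tau a (nat ((- int r) mod int a)) i)"
  by pat_completeness auto
termination by (relation "measure (\<lambda>(r, a, i). r)") auto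

text \<open>T-invariant prime divisors of the Danilov resolution Y: the rays of the
  Danilov fan are spanned by e_1, p_0, ..., p_r; E1 is the divisor of e_1 and
  D k the divisor of p_k (0 \<le> k \<le> r).  A T-invariant Weil divisor is a
  finite integer combination of them, represented by its coefficient function.\<close>
datatype prim = E1 | D nat

type_synonym divisor = "prim \<Rightarrow> int"

definition E1div :: divisor where
  "E1div = (\<lambda>p. if p = E1 then 1 else 0)"

definition Ddiv :: "nat \<Rightarrow> divisor" where
  "Ddiv k = (\<lambda>p. if p = D k then 1 else 0)"

definition effective :: "divisor \<Rightarrow> bool" where
  "effective Dv \<longleftrightarrow> (\<forall>p. 0 \<le> Dv p)"

definition Zdiv :: "nat \<Rightarrow> nat \<Rightarrow> int \<Rightarrow> divisor" where
  "Zdiv r a i = (\<lambda>p. \<Sum>k\<in>{tau r a (nat (i mod int r)) + 1 .. r}. Ddiv k p)"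

text \<open>Indices are integers
  and the family is required to be r-periodic (this is "indices mod r").\<close>
definition Xdiv :: "nat \<Rightarrow> nat \<Rightarrow> int \<Rightarrow> divisor" where
  "Xdiv r a = (THE X :: int \<Rightarrow> divisor.
      X 0 = E1div \<and>
      (\<forall>i. X i = X (i mod int r)) \<and>
      (\<forall>i p. X i p + Zdiv r a (i + 1) p = Zdiv r a i p + X (i - int a) p))"

end

theory Submission
  imports Defs "HOL-Number_Theory.Cong"
begin


declare tau.simps[simp del]

lemma tau_eq: "tau r a i =
     (if a = 1 \<or> a + 1 = r \<or> a = 0 \<or> r \<le> a
      then nat ((int a * int i - 1) mod int r)
      else if a \<le> i then tau (r - a) (r mod (r - a)) (i mod (r - a))
      else (r - a) + tau a (nat ((- int r) mod int a)) i)"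
  by (rule tau.simps)

lemma adm_L:
  assumes "admissible r a" "\<not>(a = 1 \<or> a+1 = r \<or> a = 0 \<or> r \<le> a)"
  shows "admissible (r-a) (r mod (r-a))"
proof -
  have ar: "a \<le> r" using assms(2) by simp
  have "gcd (r-a) (r mod (r-a)) = gcd r (r-a)" by (simp only: gcd_red_nat[of r "r-a"])
  also have "\<dots> = gcd (r-a) r" by (rule gcd.commute)
  also have "\<dots> = gcd a r" using ar by (rule gcd_diff2_nat)
  also have "\<dots> = 1" using assms(1) unfolding admissible_def by (simp add: gcd.commute)
  finally have g: "gcd (r-a) (r mod (r-a)) = 1" .
  have "r - a > 0" using assms(2) by simp
  then show ?thesis using g unfolding admissible_def by simp
qed

lemma adm_R:
  assumes "admissible r a" "\<not>(a = 1 \<or> a+1 = r \<or> a = 0 \<or> r \<le> a)"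
  shows "admissible a (nat ((- int r) mod int a))"
proof -
  have a0: "a > 0" using assms(2) by auto
  have "gcd (int a) ((- int r) mod int a) = gcd (- int r) (int a)"
    by (simp only: gcd_red_int[of "- int r" "int a"])
  also have "\<dots> = gcd (int a) (- int r)" by (rule gcd.commute)
  also have "\<dots> = gcd (int a) (int r)" by (rule gcd_neg2_int)
  also have "\<dots> = int (gcd a r)" by simp
  also have "\<dots> = 1" using assms(1) unfolding admissible_def by (simp add: gcd.commute)
  finally have g: "gcd (int a) ((- int r) mod int a) = 1" .
  have nn: "0 \<le> (- int r) mod int a" using a0 by simp
  have lt: "(- int r) mod int a < int a" using a0 by simp
  have "int (gcd a (nat ((- int r) mod int a))) = gcd (int a) (int (nat ((- int r) mod int a)))"
    by (rule gcd_int_int_eq[symmetric])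
  also have "\<dots> = 1" using g nn by simp
  finally have "gcd a (nat ((- int r) mod int a)) = 1" by simp
  moreover have "nat ((- int r) mod int a) < a" using lt nn by (simp add: nat_less_iff)
  ultimately show ?thesis using a0 unfolding admissible_def by auto
qed

lemma tau_lt: "admissible r a \<Longrightarrow> tau r a i < r"
proof (induction r a i rule: tau.induct)
  case (1 r a i)
  show ?case
  proof (cases "a = 1 \<or> a + 1 = r \<or> a = 0 \<or> r \<le> a")
    case True
    have "r \<ge> 1" using "1.prems" unfolding admissible_def by auto
    then show ?thesis using True by (subst tau_eq) (simp add: nat_less_iff)
  next
    case False
    note L = adm_L[OF "1.prems" False] and R = adm_R[OF "1.prems" False]
    show ?thesis
    proof (cases "a \<le> i")
      case True
      have "tau r a i = tau (r - a) (r mod (r - a)) (i mod (r - a))"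
        using False True by (subst tau_eq) simp
      moreover have "tau (r - a) (r mod (r - a)) (i mod (r - a)) < r - a"
        using "1.IH"(1)[OF False True L] .
      ultimately show ?thesis by linarith
    next
      case F2: False
      have "tau r a i = (r - a) + tau a (nat ((- int r) mod int a)) i"
        using False F2 by (subst tau_eq) simp
      moreover have "tau a (nat ((- int r) mod int a)) i < a"
        using "1.IH"(2)[OF False F2 R] .
      ultimately show ?thesis using False by linarith
    qed
  qed
qed



lemma pos_inj:
  fixes a r j j' :: nat
  assumes "coprime a r" "1 \<le> j" "j \<le> r" "1 \<le> j'" "j' \<le> r" "(j*a) mod r = (j'*a) mod r"
  shows "j = j'"
proof -
  have "[j*a = j'*a] (mod r)" using assms(6) unfolding cong_def .
  moreover have "coprime a r" by fact
  ultimately have "[j = j'] (mod r)" by (simp add: cong_mult_rcancel_nat)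
  then have m: "j mod r = j' mod r" unfolding cong_def .
  show ?thesis
  proof (cases "j = r")
    case True
    then have "j' mod r = 0" using m by simp
    then have "r dvd j'" by auto
    moreover have "j' > 0" using assms(4) by simp
    ultimately have "r \<le> j'" by (rule dvd_imp_le)
    then show ?thesis using True assms(5) by simp
  next
    case False
    then have jj: "j mod r = j" using assms(3) by simp
    have "j' \<noteq> r" using m False jj assms(2) by auto
    then have "j' mod r = j'" using assms(5) by simp
    then show ?thesis using m jj by simp
  qed
qed

lemma base_val:
  assumes "r \<ge> 1" "(a*a) mod r = 1 mod r" "1 \<le> j" "j \<le> r"
  shows "nat ((int a * int ((j*a) mod r) - 1) mod int r) = j - 1"
proof -
  have D: "\<And>X::int. (X - 1) mod int r = (X mod int r - 1) mod int r"
    by (simp add: mod_diff_left_eq)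
  have e1: "int ((j*a) mod r) = int (j*a) mod int r" by (simp add: zmod_int)
  have e2: "int (a*a) mod int r = 1 mod int r" using assms(2) by (metis of_nat_1 zmod_int)
  have "int a * int ((j*a) mod r) mod int r = int a * int (j*a) mod int r"
    unfolding e1 by (rule mod_mult_right_eq)
  also have "\<dots> = int j * int (a*a) mod int r" by (simp add: algebra_simps)
  also have "\<dots> = int j * (int (a*a) mod int r) mod int r" by (rule mod_mult_right_eq[symmetric])
  also have "\<dots> = int j mod int r" unfolding e2
    by (metis mod_mult_right_eq mult.right_neutral)
  finally have "(int a * int ((j*a) mod r) - 1) mod int r = (int j - 1) mod int r"
    by (metis D)
  also have "\<dots> = int j - 1" using assms by simp
  finally show ?thesis using assms(3) by simp
qed



lemma lower_rep:
  fixes a r j :: nat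
  assumes "0 < a" "0 < r"
  shows "((j*a div r) * nat ((- int r) mod int a)) mod a = ((j*a) mod r) mod a"
proof -
  define q where "q = j*a div r"
  define y where "y = (j*a) mod r"
  have d: "int j * int a = int q * int r + int y"
    unfolding q_def y_def by (metis div_mult_mod_eq of_nat_add of_nat_mult mult.commute)
  have nn: "0 \<le> (- int r) mod int a" using assms by simp
  have "int ((q * nat ((- int r) mod int a)) mod a) = (int q * ((- int r) mod int a)) mod int a"
    using nn by (simp add: zmod_int)
  also have "\<dots> = (int q * (- int r)) mod int a" by (simp add: mod_mult_right_eq)
  also have "\<dots> = (int q * (- int r) + int j * int a) mod int a" by (rule mod_mult_self1[symmetric])
  also have "int q * (- int r) + int j * int a = int y" using d by simp
  also have "int y mod int a = int (y mod a)" by (simp add: zmod_int)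
  finally show ?thesis unfolding q_def y_def by simp
qed

lemma upper_rep:
  fixes a r j :: nat
  assumes "a < r"
  shows "((j - j*a div r) * (r mod (r-a))) mod (r-a) = ((j*a) mod r) mod (r-a)"
proof -
  define q where "q = j*a div r"
  define y where "y = (j*a) mod r"
  have d: "int j * int a = int q * int r + int y"
    unfolding q_def y_def by (metis div_mult_mod_eq of_nat_add of_nat_mult mult.commute)
  have qj: "q \<le> j"
  proof -
    have "j*a div r \<le> j*r div r" using assms by (intro div_le_mono mult_le_mono2) simp
    moreover have "j*r div r = j" using assms by simp
    ultimately show ?thesis unfolding q_def by simp
  qed
  have rr: "int (r - a) = int r - int a" using assms by simp
  have "int (((j - q) * (r mod (r-a))) mod (r-a)) = ((int j - int q) * (int r mod int (r - a))) mod int (r-a)"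
    using qj by (simp add: zmod_int of_nat_diff)
  also have "\<dots> = ((int j - int q) * int r) mod int (r-a)" by (simp add: mod_mult_right_eq)
  also have "\<dots> = ((int j - int q) * int r - int j * int (r - a)) mod int (r-a)"
    by (simp add: mod_diff_right_eq[symmetric])
  also have "(int j - int q) * int r - int j * int (r - a) = int y"
    using d rr by (simp add: algebra_simps)
  also have "int y mod int (r - a) = int (y mod (r - a))" by (simp add: zmod_int)
  finally show ?thesis unfolding q_def y_def by simp
qed

lemma q_ge1:
  fixes a r j :: nat
  assumes "(j*a) mod r < a" "1 \<le> j" "0 < r"
  shows "1 \<le> j*a div r"
proof (rule ccontr)
  assume "\<not> 1 \<le> j*a div r"
  then have "j*a div r = 0" by simp
  then have "(j*a) mod r = j*a" by (metis div_mult_mod_eq add_0 mult_0)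
  moreover have "a \<le> j*a" using assms(2) by simp
  ultimately show False using assms(1) by simp
qed

lemma q_le:
  fixes a r j :: nat
  assumes "j \<le> r" "0 < r"
  shows "j*a div r \<le> a"
proof -
  have "j*a div r \<le> r*a div r" using assms by (intro div_le_mono mult_le_mono1) simp
  moreover have "r*a div r = a" using assms by simp
  ultimately show ?thesis by simp
qed

lemma p_ge1:
  fixes a r j :: nat
  assumes "a < r" "1 \<le> j"
  shows "j*a div r < j"
proof -
  have "j*a < j*r" using assms by simp
  then show ?thesis by (simp add: div_less_iff_less_mult mult.commute)
qed

lemma p_le:
  fixes a r j :: nat
  assumes "a < r" "j \<le> r"
  shows "j + a \<le> j*a div r + r"
proof -
  define q where "q = j*a div r"
  define y where "y = (j*a) mod r"
  have d: "int j * int a = int q * int r + int y"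
    unfolding q_def y_def by (metis div_mult_mod_eq of_nat_add of_nat_mult mult.commute)
  have yr: "int y < int r" unfolding y_def using assms by simp
  have nn: "0 \<le> (int r - int j) * (int r - int a)" using assms by simp
  have "int r * (int j + int a - int r) \<le> int j * int a" using nn by (simp add: algebra_simps)
  also have "\<dots> < int r * (int q + 1)" using d yr by (simp add: algebra_simps)
  finally have "int j + int a - int r < int q + 1"
    using assms by (simp add: mult_less_cancel_left)
  then show ?thesis unfolding q_def by simp
qed

lemma p_mono:
  fixes a r j1 j2 :: nat
  assumes "a \<le> r" "0 < r" "j1 \<le> j2"
  shows "j2*a div r \<le> j1*a div r + (j2 - j1)"
proof -
  have "j2*a = j1*a + (j2-j1)*a" using assms by (simp add: algebra_simps)
  also have "\<dots> \<le> j1*a + (j2-j1)*r" using assms by simp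
  finally have "j2*a div r \<le> (j1*a + (j2-j1)*r) div r" by (rule div_le_mono)
  also have "\<dots> = j1*a div r + (j2 - j1)" using assms by simp
  finally show ?thesis .
qed



lemma suc_mod_ne:
  fixes y m :: nat
  assumes "2 \<le> m"
  shows "(y + 1) mod m \<noteq> y mod m"
  using assms by (simp add: mod_Suc split: if_splits)

lemma key:
  assumes "admissible r a" "1 \<le> j1" "j1 \<le> r" "1 \<le> j2" "j2 \<le> r"
    "(j2*a) mod r = (j1*a+1) mod r"
  shows "tau r a ((j1*a) mod r) < tau r a ((j2*a) mod r) \<longleftrightarrow> j1 < j2"
  using assms
proof (induction r arbitrary: a j1 j2 rule: less_induct)
  case (less r)
  have r1: "r \<ge> 1" and ar: "a < r" and g: "gcd r a = 1"
    using less.prems unfolding admissible_def by auto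
  show ?case
  proof (cases "a = 1 \<or> a + 1 = r \<or> a = 0 \<or> r \<le> a")
    case True
    have aa: "(a*a) mod r = 1 mod r"
    proof -
      consider "a = 1" | "a \<ge> 1" "a + 1 = r" | "a = 0" using True ar by linarith
      then show ?thesis
      proof cases
        case 1 then show ?thesis by simp
      next
        case 2
        then have "a*a = r*(a-1) + 1" by (cases a) (auto simp: algebra_simps)
        then show ?thesis by (simp only: mod_mult_self4)
      next
        case 3
        then have "r = 1" using g by simp
        then show ?thesis by simp
      qed
    qed
    have T: "tau r a ((j*a) mod r) = j - 1" if "1 \<le> j" "j \<le> r" for j
    proof -
      have "tau r a ((j*a) mod r) = nat ((int a * int ((j*a) mod r) - 1) mod int r)"
        using True by (subst tau_eq) simp
      also have "\<dots> = j - 1" by (rule base_val[OF r1 aa that])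
      finally show ?thesis .
    qed
    have t1: "tau r a ((j1*a) mod r) = j1 - 1" using T less.prems(2,3) .
    have t2: "tau r a ((j2*a) mod r) = j2 - 1" using T less.prems(4,5) .
    show ?thesis unfolding t1 t2 using less.prems(2,4) by linarith
  next
    case False
    define r' where "r' = r - a"
    define a' where "a' = r mod (r - a)"
    define a'' where "a'' = nat ((- int r) mod int a)"
    have adm': "admissible r' a'" unfolding r'_def a'_def by (rule adm_L[OF less.prems(1) False])
    have adm'': "admissible a a''" unfolding a''_def by (rule adm_R[OF less.prems(1) False])
    have a2: "2 \<le> a" and ar2: "a + 2 \<le> r" using False ar by auto
    have r'2: "2 \<le> r'" unfolding r'_def using ar2 by simp
    have cop: "coprime a r" using g by (simp add: coprime_iff_gcd_eq_1 gcd.commute)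
    have tauU: "tau r a y = tau r' a' (y mod r')" if "a \<le> y" for y
      unfolding r'_def a'_def using False that by (subst tau_eq) simp
    have tauL: "tau r a y = r' + tau a a'' y" if "y < a" for y
      unfolding r'_def a''_def using False that by (subst tau_eq) simp
    have ltU: "tau r' a' x < r'" for x by (rule tau_lt[OF adm'])
    define y1 where "y1 = (j1*a) mod r"
    define y2 where "y2 = (j2*a) mod r"
    have y1r: "y1 < r" unfolding y1_def using r1 by simp
    have y2e: "y2 = (y1 + 1) mod r"
      unfolding y1_def y2_def less.prems(6) by (simp add: mod_Suc_eq)
    consider "y1 = r - 1" | "y1 \<noteq> r - 1" "y1 = a - 1" | "y1 < a - 1" | "a \<le> y1" "y1 < r - 1"
      using y1r by linarith
    then show ?thesis
    proof cases
      case 1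
      have "y2 = 0" using y2e 1 r1 by simp
      then have "(j2*a) mod r = (r*a) mod r" unfolding y2_def by simp
      then have j2r: "j2 = r" using pos_inj[OF cop] less.prems r1 by blast
      have "j1 \<noteq> r" using 1 ar2 unfolding y1_def by auto
      then have "j1 < j2" using j2r less.prems by simp
      moreover have "tau r a y1 < tau r a y2"
      proof -
        have "tau r a y1 < r'" using tauU[of y1] ltU 1 ar by simp
        also have "r' \<le> tau r a y2" using tauL[of y2] \<open>y2 = 0\<close> a2 by simp
        finally show ?thesis .
      qed
      ultimately show ?thesis unfolding y1_def y2_def using less.prems(2) by simp
    next
      case 2
      have "y2 = a" using y2e 2 a2 ar by simp
      then have "(j2*a) mod r = (1*a) mod r" unfolding y2_def using ar by simp
      then have "j2 = 1" using pos_inj[OF cop] less.prems r1 by blast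
      moreover have "\<not> tau r a y1 < tau r a y2"
      proof -
        have "tau r a y2 < r'" using tauU[of y2] ltU \<open>y2 = a\<close> by simp
        also have "r' \<le> tau r a y1" using tauL[of y1] 2 a2 by simp
        finally show ?thesis by simp
      qed
      ultimately show ?thesis unfolding y1_def y2_def using less.prems(2) by simp
    next
      case 3
      have y2v: "y2 = y1 + 1" using y2e 3 ar by simp
      define q1 where "q1 = j1*a div r"
      define q2 where "q2 = j2*a div r"
      have a0: "0 < a" using a2 by simp
      have rep1: "(q1 * a'') mod a = y1"
        using lower_rep[OF a0, of r j1] 3 r1 unfolding q1_def y1_def a''_def by simp
      have rep2: "(q2 * a'') mod a = y2"
        using lower_rep[OF a0, of r j2] 3 y2v r1 unfolding q2_def y2_def a''_def by simp
      have q1b: "1 \<le> q1" "q1 \<le> a"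
        using q_ge1[of j1 a r] q_le[of j1 r a] 3 less.prems r1 unfolding q1_def y1_def by auto
      have q2b: "1 \<le> q2" "q2 \<le> a"
        using q_ge1[of j2 a r] q_le[of j2 r a] 3 y2v less.prems r1 unfolding q2_def y2_def by auto
      have c1: "(q1*a''+1) mod a = ((q1*a'') mod a + 1) mod a" by (simp add: mod_Suc_eq)
      have cond: "(q2*a'') mod a = (q1*a''+1) mod a"
        unfolding c1 rep1 rep2 y2v using 3 by simp
      have IH: "tau a a'' ((q1*a'') mod a) < tau a a'' ((q2*a'') mod a) \<longleftrightarrow> q1 < q2"
        using less.IH[OF ar adm'' q1b(1) q1b(2) q2b(1) q2b(2) cond] .
      have eq: "tau r a y1 < tau r a y2 \<longleftrightarrow> q1 < q2"
        using IH tauL[of y1] tauL[of y2] 3 y2v rep1 rep2 by simp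
      have "q1 < q2 \<longleftrightarrow> j1 < j2"
      proof
        assume "q1 < q2"
        show "j1 < j2"
        proof (rule ccontr)
          assume "\<not> j1 < j2"
          then have "q2 \<le> q1" unfolding q1_def q2_def by (intro div_le_mono mult_le_mono1) simp
          then show False using \<open>q1 < q2\<close> by simp
        qed
      next
        assume "j1 < j2"
        then have "q1 \<le> q2" unfolding q1_def q2_def by (intro div_le_mono mult_le_mono1) simp
        moreover have "q1 \<noteq> q2" using rep1 rep2 y2v by auto
        ultimately show "q1 < q2" by simp
      qed
      then show ?thesis using eq unfolding y1_def y2_def by simp
    next
      case 4
      have y2v: "y2 = y1 + 1" using y2e 4 by simp
      define p1 where "p1 = j1 - j1*a div r"
      define p2 where "p2 = j2 - j2*a div r"
      have rep1: "(p1 * a') mod r' = y1 mod r'"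
        using upper_rep[OF ar, of j1] unfolding p1_def y1_def a'_def r'_def by simp
      have rep2: "(p2 * a') mod r' = y2 mod r'"
        using upper_rep[OF ar, of j2] unfolding p2_def y2_def a'_def r'_def by simp
      have p1b: "1 \<le> p1" "p1 \<le> r'"
        using p_ge1[OF ar, of j1] p_le[OF ar, of j1] less.prems unfolding p1_def r'_def by auto
      have p2b: "1 \<le> p2" "p2 \<le> r'"
        using p_ge1[OF ar, of j2] p_le[OF ar, of j2] less.prems unfolding p2_def r'_def by auto
      have c1: "(p1*a'+1) mod r' = ((p1*a') mod r' + 1) mod r'" by (simp add: mod_Suc_eq)
      have cond: "(p2*a') mod r' = (p1*a'+1) mod r'"
        unfolding c1 rep1 rep2 y2v by (simp add: mod_Suc_eq)
      have r'r: "r' < r" unfolding r'_def using a2 ar by simp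
      have IH: "tau r' a' ((p1*a') mod r') < tau r' a' ((p2*a') mod r') \<longleftrightarrow> p1 < p2"
        using less.IH[OF r'r adm' p1b(1) p1b(2) p2b(1) p2b(2) cond] .
      have eq: "tau r a y1 < tau r a y2 \<longleftrightarrow> p1 < p2"
        using IH tauU[of y1] tauU[of y2] 4 y2v rep1 rep2 by simp
      have "p1 < p2 \<longleftrightarrow> j1 < j2"
      proof
        assume "p1 < p2"
        show "j1 < j2"
        proof (rule ccontr)
          assume "\<not> j1 < j2"
          then have "j1*a div r \<le> j2*a div r + (j1 - j2)" using p_mono[of a r j2 j1] ar by simp
          moreover have "j2*a div r < j2" using p_ge1[OF ar] less.prems by simp
          moreover have "j1*a div r < j1" using p_ge1[OF ar] less.prems by simp
          ultimately have "p2 \<le> p1" using \<open>\<not> j1 < j2\<close> unfolding p1_def p2_def by linarith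
          then show False using \<open>p1 < p2\<close> by simp
        qed
      next
        assume "j1 < j2"
        then have "j2*a div r \<le> j1*a div r + (j2 - j1)" using p_mono[of a r j1 j2] ar by simp
        moreover have "j1*a div r < j1" using p_ge1[OF ar] less.prems by simp
        ultimately have "p1 \<le> p2" using \<open>j1 < j2\<close> unfolding p1_def p2_def by linarith
        moreover have "p1 \<noteq> p2" using rep1 rep2 y2v suc_mod_ne[OF r'2, of y1] by auto
        ultimately show "p1 < p2" by simp
      qed
      then show ?thesis using eq unfolding y1_def y2_def by simp
    qed
  qed
qed



lemma bij_mult:
  fixes a r c :: nat
  assumes "coprime a r" "0 < r"
  shows "bij_betw (\<lambda>j. (j*a + c) mod r) {1..r} {0..<r}"
proof -
  have inj: "inj_on (\<lambda>j. (j*a + c) mod r) {1..r}"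
  proof (rule inj_onI)
    fix x y assume x: "x \<in> {1..r}" and y: "y \<in> {1..r}" and e: "(x*a + c) mod r = (y*a + c) mod r"
    have "[x*a + c = y*a + c] (mod r)" using e by (simp add: cong_def)
    then have "[x*a = y*a] (mod r)" by (simp add: cong_add_rcancel_nat)
    then have "(x*a) mod r = (y*a) mod r" by (simp add: cong_def)
    then show "x = y" using pos_inj[OF assms(1)] x y by auto
  qed
  have sub: "(\<lambda>j. (j*a + c) mod r) ` {1..r} \<subseteq> {0..<r}" using assms(2) by auto
  have "card ((\<lambda>j. (j*a + c) mod r) ` {1..r}) = card {0..<r}"
    using card_image[OF inj] by simp
  then have "(\<lambda>j. (j*a + c) mod r) ` {1..r} = {0..<r}"
    using sub by (intro card_subset_eq) auto
  then show ?thesis using inj unfolding bij_betw_def by simp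
qed

lemma sum_mult:
  fixes a r c :: nat and g :: "nat \<Rightarrow> int"
  assumes "coprime a r" "0 < r"
  shows "(\<Sum>j\<in>{1..r}. g ((j*a + c) mod r)) = (\<Sum>x\<in>{0..<r}. g x)"
  using sum.reindex_bij_betw[OF bij_mult[OF assms, of c], of g] by simp

lemma Zdiv_cong: "i mod int r = j mod int r \<Longrightarrow> Zdiv r a i = Zdiv r a j"
  unfolding Zdiv_def by simp

lemma Zdiv_nat: "Zdiv r a (int x) = Zdiv r a (int (x mod r))"
  by (rule Zdiv_cong) (simp add: zmod_int)

definition trm :: "nat \<Rightarrow> nat \<Rightarrow> nat \<Rightarrow> divisor" where
  "trm r a j = (\<lambda>p. Zdiv r a (int (j*a)) p - Zdiv r a (int (j*a) + 1) p)"

definition Ssum :: "nat \<Rightarrow> nat \<Rightarrow> nat \<Rightarrow> divisor" where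
  "Ssum r a m = (\<lambda>p. \<Sum>j\<in>{1..m}. trm r a j p)"

lemma Ssum_full:
  assumes "coprime a r" "0 < r"
  shows "Ssum r a r p = 0"
proof -
  define g where "g x = Zdiv r a (int x) p" for x
  have A: "(\<Sum>j\<in>{1..r}. Zdiv r a (int (j*a)) p) = (\<Sum>x\<in>{0..<r}. g x)"
  proof -
    have "(\<Sum>j\<in>{1..r}. Zdiv r a (int (j*a)) p) = (\<Sum>j\<in>{1..r}. g ((j*a + 0) mod r))"
      unfolding g_def by (intro sum.cong refl) (metis Zdiv_nat add_0_right)
    also have "\<dots> = (\<Sum>x\<in>{0..<r}. g x)" by (rule sum_mult[OF assms])
    finally show ?thesis .
  qed
  have B: "(\<Sum>j\<in>{1..r}. Zdiv r a (int (j*a) + 1) p) = (\<Sum>x\<in>{0..<r}. g x)"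
  proof -
    have "(\<Sum>j\<in>{1..r}. Zdiv r a (int (j*a) + 1) p) = (\<Sum>j\<in>{1..r}. g ((j*a + 1) mod r))"
      unfolding g_def by (intro sum.cong refl) (metis Zdiv_nat of_nat_Suc add.commute Suc_eq_plus1)
    also have "\<dots> = (\<Sum>x\<in>{0..<r}. g x)" by (rule sum_mult[OF assms])
    finally show ?thesis .
  qed
  show ?thesis unfolding Ssum_def trm_def using A B by (simp add: sum_subtractf)
qed



lemma Ssum_Suc: "Ssum r a (Suc m) p = Ssum r a m p + trm r a (Suc m) p"
  unfolding Ssum_def by (simp add: sum.cl_ivl_Suc)

lemma Ssum_0: "Ssum r a 0 p = 0"
  unfolding Ssum_def by simp

lemma ma_mod:
  assumes "(b*a) mod r = 1 mod r" "0 < r"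
  shows "int (nat ((i * int b) mod int r) * a) mod int r = i mod int r"
proof -
  have ba: "(int b * int a) mod int r = 1 mod int r"
    using assms(1) by (metis of_nat_1 of_nat_mult zmod_int)
  have nn: "0 \<le> (i * int b) mod int r" using assms(2) by simp
  have "int (nat ((i * int b) mod int r) * a) = int (nat ((i * int b) mod int r)) * int a"
    by (rule of_nat_mult)
  also have "\<dots> = ((i * int b) mod int r) * int a" using nn by simp
  finally have e: "int (nat ((i * int b) mod int r) * a) = ((i * int b) mod int r) * int a" .
  have "int (nat ((i * int b) mod int r) * a) mod int r = (((i * int b) mod int r) * int a) mod int r"
    by (simp only: e)
  also have "\<dots> = (i * int b * int a) mod int r" by (rule mod_mult_left_eq)
  also have "\<dots> = (i * ((int b * int a) mod int r)) mod int r"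
    by (simp only: mult.assoc mod_mult_right_eq)
  also have "\<dots> = i mod int r" unfolding ba by (simp only: mod_mult_right_eq mult_1_right)
  finally show ?thesis .
qed

lemma X_unique_step:
  assumes P: "\<forall>i p. X i p + Zdiv r a (i + 1) p = Zdiv r a i p + X (i - int a) p"
    and X0: "X 0 = E1div"
  shows "X (int (m*a)) p = E1div p + Ssum r a m p"
proof (induction m)
  case 0
  then show ?case using X0 by (simp add: Ssum_0)
next
  case (Suc m)
  have e: "int (Suc m * a) - int a = int (m*a)" by simp
  have "X (int (Suc m * a)) p + Zdiv r a (int (Suc m * a) + 1) p
        = Zdiv r a (int (Suc m * a)) p + X (int (m*a)) p"
    using P[rule_format, of "int (Suc m * a)" p] unfolding e .
  then show ?case using Suc Ssum_Suc[of r a m p] unfolding trm_def by simp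
qed

lemma X_char:
  assumes adm: "admissible r a" and binv: "(b*a) mod r = 1 mod r"
  shows "Xdiv r a = (\<lambda>i p. E1div p + Ssum r a (nat ((i * int b) mod int r)) p)"
proof -
  have r0: "0 < r" and cop: "coprime a r" using adm unfolding admissible_def
    by (auto simp: coprime_iff_gcd_eq_1 gcd.commute)
  define X0 where "X0 = (\<lambda>i p. E1div p + Ssum r a (nat ((i * int b) mod int r)) p)"
  have ba: "(int b * int a) mod int r = 1 mod int r"
    using binv by (metis of_nat_1 of_nat_mult zmod_int)
  have P0: "X0 0 = E1div" unfolding X0_def by (simp add: Ssum_0)
  have P1: "\<forall>i. X0 i = X0 (i mod int r)"
    unfolding X0_def by (simp add: mod_mult_left_eq)
  have P2: "\<forall>i p. X0 i p + Zdiv r a (i + 1) p = Zdiv r a i p + X0 (i - int a) p"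
  proof (intro allI)
    fix i p
    define m where "m = nat ((i * int b) mod int r)"
    define m' where "m' = nat (((i - int a) * int b) mod int r)"
    have mr: "int m = (i * int b) mod int r" unfolding m_def using r0 by simp
    have m'r: "int m' = (int m - 1) mod int r"
    proof -
      have "((i - int a) * int b) mod int r = (i * int b - int b * int a) mod int r"
        by (simp add: algebra_simps)
      also have "\<dots> = ((i * int b) mod int r - (int b * int a) mod int r) mod int r"
        by (simp add: mod_diff_eq)
      also have "\<dots> = (int m - 1 mod int r) mod int r" unfolding mr ba ..
      also have "\<dots> = (int m - 1) mod int r" by (simp add: mod_diff_right_eq)
      finally show ?thesis unfolding m'_def using r0 by simp
    qed
    have Zi: "Zdiv r a (int (k*a)) = Zdiv r a i" "Zdiv r a (int (k*a) + 1) = Zdiv r a (i + 1)"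
      if "int (k*a) mod int r = i mod int r" for k
    proof -
      show "Zdiv r a (int (k*a)) = Zdiv r a i" using that by (rule Zdiv_cong)
      have "(int (k*a) + 1) mod int r = (int (k*a) mod int r + 1) mod int r"
        by (rule mod_add_left_eq[symmetric])
      also have "\<dots> = (i mod int r + 1) mod int r" by (simp only: that)
      also have "\<dots> = (i + 1) mod int r" by (rule mod_add_left_eq)
      finally show "Zdiv r a (int (k*a) + 1) = Zdiv r a (i + 1)" by (rule Zdiv_cong)
    qed
    have mi: "int (m*a) mod int r = i mod int r" unfolding m_def by (rule ma_mod[OF binv r0])
    show "X0 i p + Zdiv r a (i + 1) p = Zdiv r a i p + X0 (i - int a) p"
    proof (cases "m = 0")
      case False
      have "int m < int r" using mr r0 by simp
      then have "(int m - 1) mod int r = int m - 1" using False by (intro mod_pos_pos_trivial) auto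
      then have "int m' = int m - 1" using m'r by simp
      then have "m = Suc m'" using False by simp
      then have "Ssum r a m p = Ssum r a m' p + trm r a m p" using Ssum_Suc[of r a m' p] by simp
      then show ?thesis using Zi[OF mi] unfolding X0_def m_def[symmetric] m'_def[symmetric] trm_def
        by simp
    next
      case True
      have "(int r - 1) mod int r = int r - 1" using r0 by (intro mod_pos_pos_trivial) auto
      moreover have "(int r - 1) mod int r = (-1 + int r) mod int r" by simp
      moreover have "(-1 + int r) mod int r = (-1) mod int r" by (rule mod_add_self2)
      ultimately have "int m' = int r - 1" using m'r True by simp
      then have "r = Suc m'" by simp
      then have "Ssum r a r p = Ssum r a m' p + trm r a r p" using Ssum_Suc[of r a m' p] by simp
      then have "Ssum r a m' p = - trm r a r p" using Ssum_full[OF cop r0] by simp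
      moreover have "int (r*a) mod int r = i mod int r"
        using mi True by simp
      ultimately show ?thesis using Zi[of r] True unfolding X0_def m_def[symmetric] m'_def[symmetric] trm_def
        by (simp add: Ssum_0)
    qed
  qed
  have U: "X = X0" if PX: "X 0 = E1div \<and> (\<forall>i. X i = X (i mod int r)) \<and>
      (\<forall>i p. X i p + Zdiv r a (i + 1) p = Zdiv r a i p + X (i - int a) p)" for X
  proof (intro ext)
    fix i p
    define m where "m = nat ((i * int b) mod int r)"
    have mi: "int (m*a) mod int r = i mod int r" unfolding m_def by (rule ma_mod[OF binv r0])
    have "X i = X (i mod int r)" using PX by blast
    also have "\<dots> = X (int (m*a) mod int r)" using mi by simp
    also have "\<dots> = X (int (m*a))" using PX by (metis (no_types))
    finally have "X i p = X (int (m*a)) p" by simp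
    also have "\<dots> = E1div p + Ssum r a m p"
      using X_unique_step[of X r a m p] PX by blast
    finally show "X i p = X0 i p" unfolding X0_def m_def .
  qed
  have "Xdiv r a = X0"
    unfolding Xdiv_def
    by (rule the_equality) (use P0 P1 P2 U in blast)+
  then show ?thesis unfolding X0_def .
qed



lemma inv_ex:
  assumes "admissible r a" "2 \<le> r"
  shows "\<exists>b. 1 \<le> b \<and> b < r \<and> (b*a) mod r = 1"
proof -
  have r0: "0 < r" and cop: "coprime a r" using assms(1) unfolding admissible_def
    by (auto simp: coprime_iff_gcd_eq_1 gcd.commute)
  have "(\<lambda>j. (j*a + 0) mod r) ` {1..r} = {0..<r}"
    using bij_mult[OF cop r0, of 0] unfolding bij_betw_def by blast
  moreover have "1 \<in> {0..<r}" using assms(2) by simp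
  ultimately have "1 \<in> (\<lambda>j. (j*a + 0) mod r) ` {1..r}" by simp
  then obtain b where b1: "b \<in> {1..r}" and b2: "1 = (b*a + 0) mod r" by (rule imageE)
  have "b \<noteq> r" using b2 by auto
  then show ?thesis using b1 b2 by auto
qed

lemma Zdiv_E: "Zdiv r a x E1 = 0"
  unfolding Zdiv_def Ddiv_def by simp

lemma Zdiv_D: "Zdiv r a x (D k) = (if tau r a (nat (x mod int r)) < k \<and> k \<le> r then 1 else 0)"
proof -
  have "Zdiv r a x (D k) = (\<Sum>k'\<in>{tau r a (nat (x mod int r)) + 1 .. r}. if k' = k then 1 else 0)"
    unfolding Zdiv_def Ddiv_def by (intro sum.cong refl) auto
  also have "\<dots> = (if k \<in> {tau r a (nat (x mod int r)) + 1 .. r} then 1 else 0)"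
    by (simp add: sum.delta)
  finally show ?thesis by auto
qed

lemma trm_D:
  assumes "0 < r"
  shows "trm r a j (D k) = (if tau r a ((j*a) mod r) < k \<and> k \<le> r then 1 else 0)
                         - (if tau r a ((j*a+1) mod r) < k \<and> k \<le> r then 1 else 0)"
proof -
  have e1: "nat (int (j*a) mod int r) = (j*a) mod r"
    unfolding zmod_int[symmetric] by (rule nat_int)
  have e2: "nat ((int (j*a) + 1) mod int r) = (j*a+1) mod r"
  proof -
    have q: "int (j*a) + 1 = int (j*a+1)" by simp
    show ?thesis unfolding q zmod_int[symmetric] by (rule nat_int)
  qed
  show ?thesis unfolding trm_def Zdiv_D e1 e2 ..
qed

lemma trm_sign:
  assumes adm: "admissible r a" and r2: "2 \<le> r" and b: "1 \<le> b" "b < r" "(b*a) mod r = 1"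
    and j: "1 \<le> j" "j \<le> r"
  shows "(j + b \<le> r \<longrightarrow> 0 \<le> trm r a j p) \<and> (r < j + b \<longrightarrow> trm r a j p \<le> 0)"
proof (cases p)
  case E1
  then show ?thesis unfolding trm_def by (simp add: Zdiv_E)
next
  case (D k)
  have r0: "0 < r" using r2 by simp
  define y1 where "y1 = (j*a) mod r"
  define y2 where "y2 = (j*a+1) mod r"
  have t: "trm r a j p = (if tau r a y1 < k \<and> k \<le> r then 1 else 0)
                         - (if tau r a y2 < k \<and> k \<le> r then 1 else 0)"
    unfolding D y1_def y2_def by (rule trm_D[OF r0])
  have s: "((j + b)*a) mod r = y2"
  proof -
    have "((j + b)*a) mod r = (j*a + b*a) mod r" by (simp add: algebra_simps)
    also have "\<dots> = (j*a + (b*a) mod r) mod r" by (simp add: mod_add_right_eq)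
    also have "\<dots> = y2" unfolding b(3) y2_def ..
    finally show ?thesis .
  qed
  show ?thesis
  proof (intro conjI impI)
    assume jb: "j + b \<le> r"
    have c: "((j+b)*a) mod r = (j*a+1) mod r" using s unfolding y2_def .
    have "tau r a y1 < tau r a y2 \<longleftrightarrow> j < j + b"
      using key[OF adm j(1) j(2) _ jb c] s b(1) unfolding y1_def by simp
    then have "tau r a y1 < tau r a y2" using b(1) by simp
    then show "0 \<le> trm r a j p" unfolding t by auto
  next
    assume jb: "r < j + b"
    define j2 where "j2 = j + b - r"
    have j2b: "1 \<le> j2" "j2 \<le> r" "j2 < j" unfolding j2_def using jb b j by auto
    have "(j2*a) mod r = (j2*a + r*a) mod r" by simp
    also have "j2*a + r*a = (j+b)*a"
    proof -
      have "j2 + r = j + b" unfolding j2_def using jb by simp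
      have "j2*a + r*a = (j2 + r)*a" by (rule add_mult_distrib[symmetric])
      then show ?thesis unfolding \<open>j2 + r = j + b\<close> .
    qed
    finally have c2: "(j2*a) mod r = y2" using s by simp
    have c: "(j2*a) mod r = (j*a+1) mod r" using c2 unfolding y2_def .
    have "tau r a y1 < tau r a y2 \<longleftrightarrow> j < j2"
      using key[OF adm j(1) j(2) j2b(1) j2b(2) c] c2 unfolding y1_def by simp
    then have "\<not> tau r a y1 < tau r a y2" using j2b(3) by simp
    then show "trm r a j p \<le> 0" unfolding t by auto
  qed
qed

lemma Ssum_nonneg:
  assumes adm: "admissible r a" and r2: "2 \<le> r" and b: "1 \<le> b" "b < r" "(b*a) mod r = 1"
    and m: "m \<le> r"
  shows "0 \<le> Ssum r a m p"
proof (cases "m + b \<le> r")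
  case True
  have "0 \<le> trm r a j p" if "j \<in> {1..m}" for j
    using trm_sign[OF adm r2 b, of j p] that True m by auto
  then show ?thesis unfolding Ssum_def by (rule sum_nonneg)
next
  case False
  have r0: "0 < r" and cop: "coprime a r" using adm unfolding admissible_def
    by (auto simp: coprime_iff_gcd_eq_1 gcd.commute)
  have U: "{1..r} = {1..m} \<union> {Suc m..r}" using m by auto
  have "Ssum r a r p = Ssum r a m p + (\<Sum>j\<in>{Suc m..r}. trm r a j p)"
    unfolding Ssum_def U by (rule sum.union_disjoint) auto
  moreover have "Ssum r a r p = 0" by (rule Ssum_full[OF cop r0])
  moreover have "(\<Sum>j\<in>{Suc m..r}. trm r a j p) \<le> 0"
  proof (rule sum_nonpos)
    fix j assume "j \<in> {Suc m..r}"
    then show "trm r a j p \<le> 0" using trm_sign[OF adm r2 b, of j p] False by auto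
  qed
  ultimately show ?thesis by linarith
qed

theorem mainTheorem5:
  fixes r a i :: nat
  assumes "admissible r a" and "i < r"
  shows "effective (\<lambda>p. Xdiv r a (int i) p - E1div p)"
proof (cases "r = 1")
  case True
  have binv: "(1*a) mod r = 1 mod r" using True by simp
  have "i = 0" using assms(2) True by simp
  show ?thesis unfolding effective_def X_char[OF assms(1) binv] using True \<open>i = 0\<close>
    by (simp add: Ssum_0)
next
  case False
  then have r2: "2 \<le> r" using assms unfolding admissible_def by auto
  obtain b where b: "1 \<le> b" "b < r" "(b*a) mod r = 1" using inv_ex[OF assms(1) r2] by blast
  have binv: "(b*a) mod r = 1 mod r" using b r2 by simp
  have m: "nat ((int i * int b) mod int r) \<le> r"
    using r2 by (simp add: nat_le_iff less_imp_le)
  show ?thesis unfolding effective_def X_char[OF assms(1) binv]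
    using Ssum_nonneg[OF assms(1) r2 b m] by simp
qed

end
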